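(* Consider a single cell $K_e$ of the mesh, on which the finite element approximation is $u_h|_{K_e}=\sum_{j\in\mathcal N_e}u_j\varphi_j$ with coefficients $u_j\in\mathbb R^m$, and assume no facet of $K_e$ lies on a non-periodic boundary. Let $\mathcal G\subset\mathbb R^m$ be convex and assume $u_j\in\mathcal G$ for all $j\in\mathcal N_e$. Let $s$, $m_0^e$, $u_0^e$ be as defined in the context (so $u_0^e\in\mathcal G$), and for each $i\in\mathcal N_e^\partial$ let $\lambda_{0i}^e>0$ be such that the one-dimensional bar state $$\bar u_{0i}^e=\frac{u_i+u_0^e}{2}-\frac{(\mathbf f(u_i)-\mathbf f(u_0^e))\,\mathbf n_{i,e}}{2\lambda_{0i}^e}$$ belongs to $\mathcal G$. Define the intermediate cell average $$\bar u^e=u^e-\frac{\Delta t_e}{|K_e|}\int_{\partial K_e}\mathbf f_h\,\mathbf n\,\mathrm ds ,\qquad \mathbf f_h=\sum_{j\in\mathcal N_e}\mathbf f(u_j)\varphi_j,$$ with a parameter $\Delta t_e>0$. If $$\Delta t_e\le \Delta t_e^{\max}:=\frac1s\min\left\{\min_{i\in\mathcal N_e^\partial}\frac{m_i^e}{|\mathbf c_{i,e}|\lambda_{0i}^e},\ \frac{m_0^e}{\sum_{i\in\mathcal N_e^\partial}|\mathbf c_{i,e}|\lambda_{0i}^e}\right\},$$ then $\bar u^e\in\mathcal G$.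
   Context: Setting: $\Omega\subset\mathbb R^d$, a conforming mesh of cells $K_e$ (simplices or boxes), and a hyperbolic conservation law $\partial_t u+\nabla\cdot\mathbf f(u)=0$ with unknown $u\in\mathbb R^m$ and flux $\mathbf f:\mathbb R^m\to\mathbb R^{m\times d}$; for a vector $\mathbf n\in\mathbb R^d$, $\mathbf f(u)\mathbf n$ denotes the normal flux. The continuous finite element space of degree $p$ uses the Bernstein basis $\varphi_j$ (globally continuous, nonnegative, partition of unity). $\mathcal N_e$ is the set of global indices $j$ of basis functions supported on $K_e$; $\sum_{j\in\mathcal N_e}\varphi_j\equiv1$ on $K_e$. $\mathcal N_e^\partial=\{i\in\mathcal N_e: \mathbf x_i\in\partial K_e\}$ (nodes on the cell boundary) and $\mathcal N_e^0=\mathcal N_e\setminus\mathcal N_e^\partial$; for $i\in\mathcal N_e^0$, $\varphi_i$ vanishes on $\partial K_e$. $m_i^e=\int_{K_e}\varphi_i\,\mathrm d\mathbf x>0$, $|K_e|$ is the volume of $K_e$, and $u^e=\frac1{|K_e|}\sum_{i\in\mathcal N_e}m_i^eu_i$ is the cell average. $\mathbf n$ is the unit outward normal of $K_e$, $\mathbf c_{i,e}=\int_{\partial K_e}\varphi_i\mathbf n\,\mathrm ds$ (assumed nonzero for $i\in\mathcal N_e^\partial$), and $\mathbf n_{i,e}=\mathbf c_{i,e}/|\mathbf c_{i,e}|$. If $\mathcal N_e^0\neq\emptyset$: $s=1$, $m_0^e=\sum_{i\in\mathcal N_e^0}m_i^e$, $u_0^e=\frac1{m_0^e}\sum_{i\in\mathcal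 N_e^0}m_i^eu_i$. If $\mathcal N_e^0=\emptyset$: $s=2$, $m_0^e=|K_e|$, $u_0^e=u^e$. *)

theory Defs
  imports "HOL-Analysis.Analysis"
begin

text \<open>N   : global indices of basis functions supported on K_e (\<N>_e)
  Nb  : boundary nodes (\<N>_e^\<partial>); N - Nb are the interior nodes (\<N>_e^0)
  m i : m_i^e = integral over K_e of phi_i
  c i : c_{i,e} = boundary integral of phi_i n
  vol : |K_e|
  The geometric facts of the continuous Bernstein FE setting that are used are recorded
  as hypotheses in cell_geometry.\<close>

definition cell_geometry ::
  "'i set \<Rightarrow> 'i set \<Rightarrow> ('i \<Rightarrow> real) \<Rightarrow> ('i \<Rightarrow> real^'d) \<Rightarrow> real \<Rightarrow> bool" where
  "cell_geometry N Nb m c vol \<longleftrightarrow>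
     finite N \<and> Nb \<subseteq> N \<and> Nb \<noteq> {} \<and>
     (\<forall>i\<in>N. m i > 0) \<and>
     vol = (\<Sum>i\<in>N. m i) \<and>
     (\<forall>i\<in>N - Nb. c i = 0) \<and>
     (\<forall>i\<in>Nb. c i \<noteq> 0) \<and>
     (\<Sum>i\<in>N. c i) = 0"

definition cell_avg :: "'i set \<Rightarrow> ('i \<Rightarrow> real) \<Rightarrow> real \<Rightarrow> ('i \<Rightarrow> real^'m) \<Rightarrow> real^'m" where
  "cell_avg N m vol u = (1 / vol) *\<^sub>R (\<Sum>i\<in>N. m i *\<^sub>R u i)"

definition s_e :: "'i set \<Rightarrow> 'i set \<Rightarrow> real" where
  "s_e N Nb = (if N - Nb \<noteq> {} then 1 else 2)"

definition m0_e :: "'i set \<Rightarrow> 'i set \<Rightarrow> ('i \<Rightarrow> real) \<Rightarrow> real \<Rightarrow> real" where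
  "m0_e N Nb m vol = (if N - Nb \<noteq> {} then (\<Sum>i\<in>N - Nb. m i) else vol)"

definition u0_e :: "'i set \<Rightarrow> 'i set \<Rightarrow> ('i \<Rightarrow> real) \<Rightarrow> real \<Rightarrow> ('i \<Rightarrow> real^'m) \<Rightarrow> real^'m" where
  "u0_e N Nb m vol u =
     (if N - Nb \<noteq> {}
      then (1 / m0_e N Nb m vol) *\<^sub>R (\<Sum>i\<in>N - Nb. m i *\<^sub>R u i)
      else cell_avg N m vol u)"

definition nvec :: "real^'d \<Rightarrow> real^'d" where
  "nvec v = (1 / norm v) *\<^sub>R v"

text \<open>one-dimensional bar state; f u is the m x d flux matrix, f u *v n the normal flux\<close>
definition bar_state ::
  "(real^'m \<Rightarrow> real^'d^'m) \<Rightarrow> real^'m \<Rightarrow> real^'m \<Rightarrow> real^'d \<Rightarrow> real \<Rightarrow> real^'m" where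
  "bar_state f ui u0 n lam = (1/2) *\<^sub>R (ui + u0) - (1 / (2 * lam)) *\<^sub>R ((f ui - f u0) *v n)"

text \<open>boundary integral of f_h n with f_h = sum_j f(u_j) phi_j: by linearity it equals
  sum_j f(u_j) c_{j,e}\<close>
definition bdry_flux :: "'i set \<Rightarrow> (real^'m \<Rightarrow> real^'d^'m) \<Rightarrow> ('i \<Rightarrow> real^'m) \<Rightarrow> ('i \<Rightarrow> real^'d) \<Rightarrow> real^'m" where
  "bdry_flux N f u c = (\<Sum>j\<in>N. f (u j) *v c j)"

definition ubar_e ::
  "'i set \<Rightarrow> ('i \<Rightarrow> real) \<Rightarrow> ('i \<Rightarrow> real^'d) \<Rightarrow> real \<Rightarrow> (real^'m \<Rightarrow> real^'d^'m) \<Rightarrow> ('i \<Rightarrow> real^'m) \<Rightarrow> real \<Rightarrow> real^'m" where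
  "ubar_e N m c vol f u dt = cell_avg N m vol u - (dt / vol) *\<^sub>R bdry_flux N f u c"

definition dt_max ::
  "'i set \<Rightarrow> 'i set \<Rightarrow> ('i \<Rightarrow> real) \<Rightarrow> ('i \<Rightarrow> real^'d) \<Rightarrow> real \<Rightarrow> ('i \<Rightarrow> real) \<Rightarrow> real" where
  "dt_max N Nb m c vol lam =
     (1 / s_e N Nb) * min (Min ((\<lambda>i. m i / (norm (c i) * lam i)) ` Nb))
                          (m0_e N Nb m vol / (\<Sum>i\<in>Nb. norm (c i) * lam i))"

end

theory Submission
  imports Defs
begin

lemma sum_I:
  assumes "finite Nb"
  shows "sum g (insert None (Some ` (Nb <+> Nb))) =
         g None + sum (\<lambda>i. g (Some (Inl i))) Nb + sum (\<lambda>i. g (Some (Inr i))) Nb"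
proof -
  have "sum g (insert None (Some ` (Nb <+> Nb))) = g None + sum g (Some ` (Nb <+> Nb))"
    using assms by (subst sum.insert) auto
  also have "sum g (Some ` (Nb <+> Nb)) = sum (g \<circ> Some) (Nb <+> Nb)"
    by (rule sum.reindex) simp
  also have "\<dots> = sum (\<lambda>i. g (Some (Inl i))) Nb + sum (\<lambda>i. g (Some (Inr i))) Nb"
    using assms by (simp add: sum.Plus comp_def)
  finally show ?thesis by (simp add: add.assoc)
qed

lemma bar_identity:
  fixes F0 Fi :: "real^'d^'m" and c :: "real^'d"
  assumes "c \<noteq> 0" "lam > 0"
    and b: "b = (1/2) *\<^sub>R (ui + u0) - (1 / (2 * lam)) *\<^sub>R ((Fi - F0) *v nvec c)"
  shows "Fi *v c - F0 *v c = (norm c * lam) *\<^sub>R (ui + u0 - 2 *\<^sub>R b)"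
proof -
  have cn: "c = norm c *\<^sub>R nvec c" using assms(1) by (simp add: nvec_def)
  define X where "X = (Fi - F0) *v nvec c"
  have "ui + u0 - 2 *\<^sub>R b = (1/lam) *\<^sub>R X"
    using assms(2) unfolding b X_def[symmetric] by (simp add: algebra_simps scaleR_diff_right)
  hence X: "X = lam *\<^sub>R (ui + u0 - 2 *\<^sub>R b)" using assms(2) by simp
  have "Fi *v c - F0 *v c = (Fi - F0) *v c" by (simp add: matrix_vector_mult_diff_rdistrib)
  also have "\<dots> = norm c *\<^sub>R X" unfolding X_def
    by (subst cn) (simp add: matrix_vector_mult_scaleR)
  finally show ?thesis by (simp add: X)
qed

theorem lemma1:
  fixes N Nb :: "'i set" and m :: "'i \<Rightarrow> real" and c :: "'i \<Rightarrow> real^'d" and vol :: real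
    and f :: "real^'m \<Rightarrow> real^'d^'m" and u :: "'i \<Rightarrow> real^'m"
    and G :: "(real^'m) set" and lam :: "'i \<Rightarrow> real" and dt :: real
  assumes geom: "cell_geometry N Nb m c vol"
    and convG: "convex G"
    and uG: "\<forall>j\<in>N. u j \<in> G"
    and lam_pos: "\<forall>i\<in>Nb. lam i > 0"
    and barG: "\<forall>i\<in>Nb. bar_state f (u i) (u0_e N Nb m vol u) (nvec (c i)) (lam i) \<in> G"
    and dt_pos: "dt > 0"
    and dt_le: "dt \<le> dt_max N Nb m c vol lam"
  shows "ubar_e N m c vol f u dt \<in> G"
proof -
  from geom have finN: "finite N" and sub: "Nb \<subseteq> N" and ne: "Nb \<noteq> {}"
    and mpos: "\<forall>i\<in>N. m i > 0" and vold: "vol = (\<Sum>i\<in>N. m i)"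
    and c0: "\<forall>i\<in>N - Nb. c i = 0" and cnz: "\<forall>i\<in>Nb. c i \<noteq> 0" and csum: "(\<Sum>i\<in>N. c i) = 0"
    unfolding cell_geometry_def by auto
  have finNb: "finite Nb" using finN sub finite_subset by blast
  define s where "s = s_e N Nb"
  define m0 where "m0 = m0_e N Nb m vol"
  define u0 where "u0 = u0_e N Nb m vol u"
  define a where "a i = norm (c i) * lam i" for i
  define A where "A = (\<Sum>i\<in>Nb. a i)"
  define b where "b i = bar_state f (u i) u0 (nvec (c i)) (lam i)" for i
  have apos: "\<forall>i\<in>Nb. a i > 0" using cnz lam_pos by (simp add: a_def)
  have Apos: "A > 0" unfolding A_def using apos finNb ne by (simp add: sum_pos)
  have volpos: "vol > 0" unfolding vold
    using mpos finN ne sub by (metis sum_pos subset_empty)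
  have spos: "s > 0" by (simp add: s_def s_e_def)
  have u0G: "u0 \<in> G"
  proof (cases "N - Nb \<noteq> {}")
    case True
    have m0p: "m0 > 0" unfolding m0_def m0_e_def using True mpos finN
      by (simp, intro sum_pos) auto
    have "u0 = (\<Sum>i\<in>N - Nb. (m i / m0) *\<^sub>R u i)"
      unfolding u0_def u0_e_def m0_def[symmetric] using True
      by (simp add: scaleR_sum_right)
    moreover have "(\<Sum>i\<in>N - Nb. (m i / m0) *\<^sub>R u i) \<in> G"
      apply (rule convex_sum[OF _ convG])
      using finN m0p mpos uG True
      by (auto simp: m0_def m0_e_def sum_divide_distrib[symmetric])
    ultimately show ?thesis by simp
  next
    case False
    have "u0 = (\<Sum>i\<in>N. (m i / vol) *\<^sub>R u i)"
      unfolding u0_def u0_e_def cell_avg_def using False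
      by (simp add: scaleR_sum_right)
    moreover have "(\<Sum>i\<in>N. (m i / vol) *\<^sub>R u i) \<in> G"
      apply (rule convex_sum[OF _ convG])
      using finN volpos mpos uG
      by (auto simp: vold sum_divide_distrib[symmetric])
    ultimately show ?thesis by simp
  qed
  have bG: "\<forall>i\<in>Nb. b i \<in> G" using barG by (simp add: b_def u0_def)
  have flux: "bdry_flux N f u c = (\<Sum>i\<in>Nb. a i *\<^sub>R (u i + u0 - 2 *\<^sub>R b i))"
  proof -
    have "bdry_flux N f u c = (\<Sum>j\<in>Nb. f (u j) *v c j)"
      unfolding bdry_flux_def
      by (rule sum.mono_neutral_right[OF finN sub]) (simp add: c0)
    moreover have "(\<Sum>j\<in>Nb. f u0 *v c j) = 0"
    proof -
      have "(\<Sum>j\<in>Nb. c j) = (\<Sum>j\<in>N. c j)"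
        by (rule sum.mono_neutral_left[OF finN sub]) (simp add: c0)
      hence "(\<Sum>j\<in>Nb. c j) = 0" using csum by simp
      thus ?thesis by (simp add: vec.sum[symmetric])
    qed
    ultimately have "bdry_flux N f u c = (\<Sum>j\<in>Nb. f (u j) *v c j - f u0 *v c j)"
      by (simp add: sum_subtractf)
    also have "\<dots> = (\<Sum>i\<in>Nb. a i *\<^sub>R (u i + u0 - 2 *\<^sub>R b i))"
      apply (rule sum.cong[OF refl])
      unfolding a_def
      apply (rule bar_identity)
      using cnz lam_pos by (auto simp: b_def bar_state_def)
    finally show ?thesis .
  qed
  have mass: "(\<Sum>i\<in>N. m i *\<^sub>R u i) = (\<Sum>i\<in>Nb. (m i / s) *\<^sub>R u i) + (m0 / s) *\<^sub>R u0"
    and wsum: "(\<Sum>i\<in>Nb. m i / s) + m0 / s = vol"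
  proof -
    have "(\<Sum>i\<in>N. m i *\<^sub>R u i) = (\<Sum>i\<in>Nb. (m i / s) *\<^sub>R u i) + (m0 / s) *\<^sub>R u0 \<and>
          (\<Sum>i\<in>Nb. m i / s) + m0 / s = vol"
    proof (cases "N - Nb \<noteq> {}")
      case True
      have m0p: "m0 > 0" unfolding m0_def m0_e_def using True mpos finN
        by (simp, intro sum_pos) auto
      have s1: "s = 1" using True by (simp add: s_def s_e_def)
      have "m0 *\<^sub>R u0 = (\<Sum>i\<in>N - Nb. m i *\<^sub>R u i)"
        unfolding u0_def u0_e_def m0_def[symmetric] using True m0p by simp
      moreover have "(\<Sum>i\<in>N. m i *\<^sub>R u i) = (\<Sum>i\<in>Nb. m i *\<^sub>R u i) + (\<Sum>i\<in>N - Nb. m i *\<^sub>R u i)"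
        using sum.subset_diff[OF sub finN] by (simp add: add.commute)
      moreover have "vol = (\<Sum>i\<in>Nb. m i) + (\<Sum>i\<in>N - Nb. m i)"
        using sum.subset_diff[OF sub finN] vold by (simp add: add.commute)
      ultimately show ?thesis using True by (simp add: s1 m0_def m0_e_def)
    next
      case False
      hence NN: "N = Nb" using sub by auto
      have s2: "s = 2" using False by (simp add: s_def s_e_def)
      have m0v: "m0 = vol" using False by (simp add: m0_def m0_e_def)
      have "vol *\<^sub>R u0 = (\<Sum>i\<in>N. m i *\<^sub>R u i)"
        unfolding u0_def u0_e_def cell_avg_def using False volpos by simp
      moreover have "(m0 / s) *\<^sub>R u0 = (1/2) *\<^sub>R (vol *\<^sub>R u0)"
        by (simp add: s2 m0v)
      ultimately have h1: "(m0 / s) *\<^sub>R u0 = (1/2) *\<^sub>R (\<Sum>i\<in>N. m i *\<^sub>R u i)"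
        by simp
      have h2: "(\<Sum>i\<in>Nb. (m i / s) *\<^sub>R u i) = (1/2) *\<^sub>R (\<Sum>i\<in>N. m i *\<^sub>R u i)"
        by (simp add: s2 NN scaleR_sum_right)
      have "(\<Sum>i\<in>Nb. (m i / s) *\<^sub>R u i) + (m0 / s) *\<^sub>R u0 = (1/2) *\<^sub>R (\<Sum>i\<in>N. m i *\<^sub>R u i) + (1/2) *\<^sub>R (\<Sum>i\<in>N. m i *\<^sub>R u i)"
        by (simp only: h1 h2)
      moreover have "(\<Sum>i\<in>Nb. m i / s) + m0 / s = vol"
        by (simp add: s2 m0v NN vold sum_divide_distrib[symmetric])
      ultimately show ?thesis by (simp add: scaleR_add_left[symmetric])
    qed
    thus "(\<Sum>i\<in>N. m i *\<^sub>R u i) = (\<Sum>i\<in>Nb. (m i / s) *\<^sub>R u i) + (m0 / s) *\<^sub>R u0"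
      and "(\<Sum>i\<in>Nb. m i / s) + m0 / s = vol" by auto
  qed
  have dtmax: "dt \<le> (1/s) * min (Min ((\<lambda>i. m i / a i) ` Nb)) (m0 / A)"
    using dt_le by (simp add: dt_max_def s_def m0_def a_def A_def)
  have b1: "\<forall>i\<in>Nb. dt * a i \<le> m i / s"
  proof
    fix i assume i: "i \<in> Nb"
    have "Min ((\<lambda>i. m i / a i) ` Nb) \<le> m i / a i" using i finNb by simp
    hence "dt \<le> (1/s) * (m i / a i)" using dtmax spos
      by (smt (verit, best) mult_left_mono divide_nonneg_pos)
    thus "dt * a i \<le> m i / s" using apos i spos by (auto simp: field_simps)
  qed
  have b2: "dt * A \<le> m0 / s"
  proof -
    have "dt \<le> (1/s) * (m0 / A)" using dtmax spos
      by (smt (verit, best) mult_left_mono divide_nonneg_pos)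
    thus ?thesis using Apos spos by (auto simp: field_simps)
  qed
  define I where "I = insert None (Some ` (Nb <+> Nb))"
  define w where "w k = (case k of None \<Rightarrow> (m0 / s - dt * A) / vol
     | Some (Inl i) \<Rightarrow> (m i / s - dt * a i) / vol | Some (Inr i) \<Rightarrow> 2 * dt * a i / vol)" for k
  define y where "y k = (case k of None \<Rightarrow> u0
     | Some (Inl i) \<Rightarrow> u i | Some (Inr i) \<Rightarrow> b i)" for k
  have "(\<Sum>k\<in>I. w k *\<^sub>R y k) \<in> G"
  proof (rule convex_sum[OF _ convG])
    show "finite I" unfolding I_def using finNb by simp
    show "sum w I = 1"
    proof -
      have e1: "(\<Sum>i\<in>Nb. m i / s - dt * a i) = (\<Sum>i\<in>Nb. m i / s) - dt * A"
        by (simp add: sum_subtractf sum_distrib_left A_def)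
      have e2: "(\<Sum>i\<in>Nb. 2 * dt * a i) = 2 * dt * A"
        by (simp add: sum_distrib_left A_def)
      have "sum w I = ((m0 / s - dt * A) + (\<Sum>i\<in>Nb. m i / s - dt * a i) + (\<Sum>i\<in>Nb. 2 * dt * a i)) / vol"
        unfolding I_def sum_I[OF finNb]
        by (simp add: w_def sum_divide_distrib[symmetric] add_divide_distrib)
      also have "\<dots> = vol / vol" unfolding e1 e2 using wsum by simp
      finally show ?thesis using volpos by simp
    qed
    show "\<And>i. i \<in> I \<Longrightarrow> 0 \<le> w i"
      unfolding I_def w_def using b1 b2 volpos dt_pos apos
      by (auto intro!: divide_nonneg_pos mult_nonneg_nonneg simp: less_imp_le)
    show "\<And>i. i \<in> I \<Longrightarrow> y i \<in> G"
      unfolding I_def y_def using u0G uG bG sub by auto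
  qed
  moreover have "ubar_e N m c vol f u dt = (\<Sum>k\<in>I. w k *\<^sub>R y k)"
  proof -
    have "(\<Sum>k\<in>I. w k *\<^sub>R y k) = (1/vol) *\<^sub>R ((m0 / s - dt * A) *\<^sub>R u0
        + (\<Sum>i\<in>Nb. (m i / s - dt * a i) *\<^sub>R u i) + (\<Sum>i\<in>Nb. (2 * dt * a i) *\<^sub>R b i))"
      unfolding I_def sum_I[OF finNb]
      by (simp add: w_def y_def scaleR_sum_right scaleR_add_right divide_inverse mult.commute)
    also have "(m0 / s - dt * A) *\<^sub>R u0
        + (\<Sum>i\<in>Nb. (m i / s - dt * a i) *\<^sub>R u i) + (\<Sum>i\<in>Nb. (2 * dt * a i) *\<^sub>R b i)
        = (\<Sum>i\<in>N. m i *\<^sub>R u i) - dt *\<^sub>R bdry_flux N f u c"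
      unfolding mass flux A_def
      using scaleR_sum_left[of "\<lambda>x. dt * a x" Nb u0, symmetric] sum_distrib_left[of dt a Nb]
      by (simp add: scaleR_sum_right scaleR_diff_left scaleR_diff_right scaleR_add_right
          sum.distrib sum_subtractf scaleR_sum_left algebra_simps)
    finally show ?thesis
      unfolding ubar_e_def cell_avg_def using volpos
      by (simp add: scaleR_diff_right)
  qed
  ultimately show ?thesis by simp
qed

end
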